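(* For $n\in\mathbb N$, $$\Phi^*_n(-1)=\begin{cases}-2 & n=1,\\ 0 & n=2^a,\ a\ge1,\\ p^b & n=2^ap^b \text{ with } p \text{ an odd prime},\ a,b\ge1,\\ 1 & \text{otherwise}.\end{cases}$$
   Context: $d\mid\mid n$ means $d\mid n$ and $\gcd(d,n/d)=1$; $(j,n)_*=\max\{d: d\mid j,\ d\mid\mid n\}$; $\Phi^*_n(x)=\prod_{1\le j\le n,\ (j,n)_*=1}(x-e^{2\pi i j/n})$. *)

theory Defs
  imports "HOL-Analysis.Analysis" "HOL-Computational_Algebra.Polynomial"
begin

definition unitary_dvd :: "nat \<Rightarrow> nat \<Rightarrow> bool" where
  "unitary_dvd d n \<longleftrightarrow> d dvd n \<and> coprime d (n div d)"

definition gcd_star :: "nat \<Rightarrow> nat \<Rightarrow> nat" where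
  "gcd_star j n = Max {d. d dvd j \<and> unitary_dvd d n}"

definition Phi_star :: "nat \<Rightarrow> complex poly" where
  "Phi_star n = (\<Prod>j\<in>{j\<in>{1..n}. gcd_star j n = 1}.
      [:- exp (2 * of_real pi * \<i> * of_nat j / of_nat n), 1:])"

end

theory Submission
  imports Defs "HOL-Computational_Algebra.Fundamental_Theorem_Algebra"
begin


lemma unity_poly:
  assumes N: "N \<ge> 1"
  shows "(monom 1 N - 1 :: complex poly) = (\<Prod>z\<in>{z. z^N=1}. [:-z,1:])"
proof -
  define p :: "complex poly" where "p = monom 1 N - 1"
  have pz: "poly p z = z^N - 1" for z by (simp add: p_def poly_monom)
  have dp: "poly (pderiv p) z = of_nat N * z^(N-1)" for z
    by (simp add: p_def pderiv_diff pderiv_monom poly_monom)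
  have cN: "coeff p N = 1" using N by (simp add: p_def coeff_monom)
  have p0: "p \<noteq> 0" using cN by auto
  have deg: "degree p = N"
  proof (rule antisym)
    show "degree p \<le> N" unfolding p_def
      by (metis degree_diff_le degree_monom_le degree_1 le0)
    show "N \<le> degree p" using cN by (simp add: le_degree)
  qed
  have lc: "lead_coeff p = 1" using deg cN by simp
  have rsq: "rsquarefree p"
    unfolding rsquarefree_roots
  proof (intro allI notI)
    fix a assume "poly p a = 0 \<and> poly (pderiv p) a = 0"
    then have "a^N = 1" "of_nat N * a^(N-1) = 0" using pz dp by auto
    then show False using N by (cases "a = 0") (auto simp: power_0_left)
  qed
  have "p = smult (lead_coeff p) (\<Prod>z|poly p z = 0. [:-z, 1:] ^ order z p)"
    by (rule complex_poly_decompose[symmetric])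
  also have "\<dots> = (\<Prod>z\<in>{z. z^N=1}. [:-z, 1:])"
    unfolding lc smult_1_left
    by (intro prod.cong) (auto simp: rsquarefree_root_order[OF rsq _ p0] pz)
  finally show ?thesis by (simp add: p_def)
qed

definition gg :: "complex \<Rightarrow> complex" where
  "gg z = (if z = -1 then 1 else -1 - z)"

lemma unity_prod_gg:
  assumes N: "N \<ge> 1"
  shows "(\<Prod>z\<in>{z::complex. z^N=1}. gg z) = (if odd N then -2 else - of_nat N)"
proof -
  define R where "R = {z::complex. z^N=1}"
  have fin: "finite R" unfolding R_def using finite_roots_unity[OF N] .
  have P: "poly (\<Prod>z\<in>R. [:-z,1:]) x = x^N - 1" for x
    using unity_poly[OF N] by (metis R_def poly_monom poly_diff poly_1 mult_1)
  show ?thesis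
  proof (cases "odd N")
    case True
    then have "-1 \<notin> R" by (simp add: R_def)
    then have "(\<Prod>z\<in>R. gg z) = (\<Prod>z\<in>R. -1 - z)"
      by (intro prod.cong) (auto simp: gg_def)
    also have "\<dots> = poly (\<Prod>z\<in>R. [:-z,1:]) (-1)" by (auto simp: poly_prod intro!: prod.cong)
    also have "\<dots> = -2" using P True by simp
    finally show ?thesis using True by (simp add: R_def)
  next
    case False
    then have m1: "-1 \<in> R" by (simp add: R_def)
    define q where "q = (\<Prod>z\<in>R-{-1}. [:-z,1:])"
    have e: "(\<Prod>z\<in>R. [:-z,1:]) = [:1,1:] * q"
      unfolding q_def using prod.remove[OF fin m1, of "\<lambda>z. [:-z,1:]"] by simp
    have "pderiv (\<Prod>z\<in>R. [:-z,1:]) = [:1,1:] * pderiv q + q * pderiv [:1,1:]"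
      by (simp only: e pderiv_mult)
    then have "poly (pderiv (\<Prod>z\<in>R. [:-z,1:])) (-1) = poly q (-1)"
      by (simp add: pderiv_pCons)
    moreover have "pderiv (\<Prod>z\<in>R. [:-z,1:]) = pderiv (monom 1 N - 1)"
      using unity_poly[OF N] by (simp add: R_def)
    moreover have "poly (pderiv (monom 1 N - (1::complex poly))) (-1) = - of_nat N"
      using False N by (simp add: pderiv_diff pderiv_monom poly_monom)
    ultimately have q1: "poly q (-1) = - of_nat N" by simp
    have "(\<Prod>z\<in>R. gg z) = gg (-1) * (\<Prod>z\<in>R-{-1}. gg z)"
      using prod.remove[OF fin m1] by simp
    also have "\<dots> = (\<Prod>z\<in>R-{-1}. -1 - z)"
      by (simp add: gg_def)
    also have "\<dots> = poly q (-1)" by (auto simp: q_def poly_prod intro!: prod.cong)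
    finally show ?thesis using q1 False by (simp add: R_def)
  qed
qed

definition zeta :: "nat \<Rightarrow> nat \<Rightarrow> complex" where
  "zeta N k = exp (2 * of_real pi * \<i> * of_nat k / of_nat N)"

definition HH :: "nat \<Rightarrow> nat set \<Rightarrow> complex" where
  "HH N A = (\<Prod>k\<in>{k\<in>{1..N}. \<forall>t\<in>A. \<not> t dvd k}. gg (zeta N k))"

lemma zeta_bij:
  assumes N: "N \<ge> 1"
  shows "bij_betw (zeta N) {1..N} {z. z^N = 1}"
  unfolding bij_betw_def
proof
  show "inj_on (zeta N) {1..N}"
  proof (rule inj_onI)
    fix j k assume j: "j \<in> {1..N}" and k: "k \<in> {1..N}" and e: "zeta N j = zeta N k"
    then have "j mod N = k mod N" using complex_root_unity_eq[OF N] by (simp add: zeta_def)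
    then show "j = k" using j k
    proof -
      have m: "x mod N = (if x = N then 0 else x)" if "x \<in> {1..N}" for x
        using that by auto
      show ?thesis using m[OF j] m[OF k] j k \<open>j mod N = k mod N\<close>
        by (auto split: if_splits)
    qed
  qed
  show "zeta N ` {1..N} = {z. z ^ N = 1}"
  proof
    show "zeta N ` {1..N} \<subseteq> {z. z ^ N = 1}"
      using complex_root_unity N by (auto simp: zeta_def)
    show "{z. z ^ N = 1} \<subseteq> zeta N ` {1..N}"
    proof
      fix z :: complex assume "z \<in> {z. z^N = 1}"
      then obtain j where j: "j < N" "z = zeta N j"
        using complex_roots_unity[OF N] by (auto simp: zeta_def)
      show "z \<in> zeta N ` {1..N}"
      proof (cases "j = 0")
        case True
        have "zeta N N = zeta N 0" using complex_root_unity_eq[OF N, of N 0] by (simp add: zeta_def)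
        then show ?thesis using True j N by (metis atLeastAtMost_iff image_eqI order_refl)
      next
        case False then show ?thesis using j by auto
      qed
    qed
  qed
qed

lemma HH_empty:
  assumes N: "N \<ge> 1"
  shows "HH N {} = (if odd N then -2 else - of_nat N)"
proof -
  have "{k\<in>{1..N}. \<forall>t\<in>{}. \<not> t dvd k} = {1..N}" by auto
  then have "HH N {} = (\<Prod>k\<in>{1..N}. gg (zeta N k))" unfolding HH_def by (simp only:)
  also have "\<dots> = (\<Prod>z\<in>{z. z^N = 1}. gg z)"
    by (rule prod.reindex_bij_betw[OF zeta_bij[OF N]])
  also have "\<dots> = (if odd N then -2 else - of_nat N)" by (rule unity_prod_gg[OF N])
  finally show ?thesis .
qed

lemma zeta_mult:
  assumes "u dvd N" "N > 0"
  shows "zeta N (u * k) = zeta (N div u) k"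
proof -
  obtain q where q: "N = u * q" using assms(1) by blast
  have "u > 0" "q > 0" using assms q by auto
  then show ?thesis using q by (simp add: zeta_def field_simps)
qed

lemma HH_rec:
  assumes u: "u dvd N" and N: "N > 0" and cop: "\<forall>t\<in>A. coprime t u"
  shows "HH N A = HH N (insert u A) * HH (N div u) A"
proof -
  have u0: "u > 0" using u N by (metis dvd_0_left_iff gr0I less_irrefl)
  define X where "X = {k\<in>{1..N}. \<forall>t\<in>A. \<not> t dvd k}"
  define Y where "Y = {k\<in>{1..N}. \<forall>t\<in>insert u A. \<not> t dvd k}"
  define W where "W = {k\<in>{1..N div u}. \<forall>t\<in>A. \<not> t dvd k}"
  have XYZ: "X = Y \<union> (\<lambda>k. u * k) ` W"
  proof (intro equalityI subsetI)
    fix k assume k: "k \<in> X"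
    show "k \<in> Y \<union> (\<lambda>k. u * k) ` W"
    proof (cases "u dvd k")
      case True
      then obtain l where l: "k = u * l" by blast
      have "l \<in> W"
      proof -
        have "l \<ge> 1" using k l by (auto simp: X_def)
        moreover have "l \<le> N div u" using k l u0
          by (auto simp: X_def) (metis div_mult_self1_is_m div_le_mono)
        moreover have "\<forall>t\<in>A. \<not> t dvd l" using k l by (auto simp: X_def)
        ultimately show ?thesis by (simp add: W_def)
      qed
      then show ?thesis using l by blast
    next
      case False then show ?thesis using k by (auto simp: X_def Y_def)
    qed
  next
    fix k assume "k \<in> Y \<union> (\<lambda>k. u * k) ` W"
    then show "k \<in> X"
    proof
      assume "k \<in> Y" then show ?thesis by (auto simp: X_def Y_def)
    next
      assume "k \<in> (\<lambda>k. u * k) ` W"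
      then obtain l where l: "k = u * l" "l \<in> W" by blast
      have "1 \<le> k" using l u0 by (auto simp: W_def)
      moreover have "k \<le> N" using l u by (auto simp: W_def) (metis dvd_mult_div_cancel mult_le_mono2)
      moreover have "\<forall>t\<in>A. \<not> t dvd k"
        using l cop by (auto simp: W_def coprime_dvd_mult_right_iff)
      ultimately show ?thesis by (simp add: X_def)
    qed
  qed
  have disj: "Y \<inter> (\<lambda>k. u * k) ` W = {}" by (auto simp: Y_def)
  have inj: "inj_on (\<lambda>k. u * k) W" using u0 by (auto simp: inj_on_def)
  have "HH N A = (\<Prod>k\<in>X. gg (zeta N k))" by (simp add: HH_def X_def)
  also have "\<dots> = (\<Prod>k\<in>Y. gg (zeta N k)) * (\<Prod>k\<in>(\<lambda>k. u * k) ` W. gg (zeta N k))"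
    unfolding XYZ by (rule prod.union_disjoint) (auto simp: Y_def W_def disj)
  also have "(\<Prod>k\<in>(\<lambda>k. u * k) ` W. gg (zeta N k)) = (\<Prod>k\<in>W. gg (zeta N (u * k)))"
    by (simp add: prod.reindex[OF inj])
  also have "\<dots> = HH (N div u) A" by (simp add: HH_def W_def zeta_mult[OF u N])
  finally show ?thesis by (simp add: HH_def Y_def)
qed

lemma gs_one_iff:
  assumes j: "j \<ge> 1"
  shows "gcd_star j n = 1 \<longleftrightarrow> (\<forall>d. d dvd j \<and> unitary_dvd d n \<longrightarrow> d = 1)"
proof -
  define D where "D = {d. d dvd j \<and> unitary_dvd d n}"
  have fin: "finite D" unfolding D_def using j
    by (intro finite_subset[OF _ finite_divisors_nat[of j]]) auto
  have one: "1 \<in> D" by (simp add: D_def unitary_dvd_def)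
  have pos: "d \<in> D \<Longrightarrow> d \<ge> 1" for d using j
    by (auto simp: D_def intro: Nat.gr0I)
  show ?thesis
  proof
    assume "gcd_star j n = 1"
    then have "Max D = 1" by (simp add: gcd_star_def D_def)
    then have "d \<in> D \<Longrightarrow> d = 1" for d using Max_ge[OF fin, of d] pos[of d] by auto
    then show "\<forall>d. d dvd j \<and> unitary_dvd d n \<longrightarrow> d = 1" by (auto simp: D_def)
  next
    assume "\<forall>d. d dvd j \<and> unitary_dvd d n \<longrightarrow> d = 1"
    then have "D = {1}" using one by (auto simp: D_def)
    then show "gcd_star j n = 1" by (simp add: gcd_star_def D_def)
  qed
qed

lemma atom_unitary:
  assumes n: "n \<ge> 1" and p: "p \<in> prime_factors n"
  shows "unitary_dvd (p ^ multiplicity p n) n" "p ^ multiplicity p n \<noteq> 1"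
proof -
  have pr: "prime p" using p by auto
  have "multiplicity p n > 0" using p n by (auto simp: prime_factors_multiplicity)
  then show "p ^ multiplicity p n \<noteq> 1" using pr prime_gt_1_nat by auto
  have "\<not> p dvd (n div p ^ multiplicity p n)"
    using n pr by (intro multiplicity_decompose) (auto simp: prime_gt_1_nat)
  then have "coprime p (n div p ^ multiplicity p n)"
    by (rule prime_imp_coprime[OF pr])
  then have "coprime (p ^ multiplicity p n) (n div p ^ multiplicity p n)"
    by (simp add: coprime_power_left_iff)
  then show "unitary_dvd (p ^ multiplicity p n) n"
    by (simp add: unitary_dvd_def multiplicity_dvd)
qed

lemma unitary_atom:
  assumes n: "n \<ge> 1" and d: "unitary_dvd d n" "d \<noteq> 1"
  shows "\<exists>p\<in>prime_factors n. p ^ multiplicity p n dvd d"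
proof -
  have dn: "d dvd n" and cop: "coprime d (n div d)" using d by (auto simp: unitary_dvd_def)
  have d0: "d \<noteq> 0" using dn n by auto
  obtain p where p: "prime p" "p dvd d" using d(2) prime_factor_nat by blast
  have pn: "p \<in> prime_factors n" using p dn n by (auto simp: prime_factors_dvd intro: dvd_trans)
  have nd: "n = d * (n div d)" using dn by simp
  have q0: "n div d \<noteq> 0" using nd n by (metis mult_0_right not_one_le_zero)
  have "\<not> p dvd (n div d)"
    using cop p by (meson coprime_common_divisor not_prime_unit)
  then have "multiplicity p (n div d) = 0" by (rule not_dvd_imp_multiplicity_0)
  then have "multiplicity p n = multiplicity p d"
    using prime_elem_multiplicity_mult_distrib[of p d "n div d"] p d0 q0 nd by simp
  then have "p ^ multiplicity p n dvd d" by (simp add: multiplicity_dvd)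
  then show ?thesis using pn by blast
qed

definition atoms :: "nat \<Rightarrow> nat set" where
  "atoms n = (\<lambda>p. p ^ multiplicity p n) ` prime_factors n"

lemma gs_one_atoms:
  assumes n: "n \<ge> 1" and j: "j \<ge> 1"
  shows "gcd_star j n = 1 \<longleftrightarrow> (\<forall>t\<in>atoms n. \<not> t dvd j)"
proof -
  have "gcd_star j n = 1 \<longleftrightarrow> \<not> (\<exists>d. d dvd j \<and> unitary_dvd d n \<and> d \<noteq> 1)"
    using gs_one_iff[OF j] by blast
  also have "\<dots> \<longleftrightarrow> (\<forall>t\<in>atoms n. \<not> t dvd j)"
  proof
    assume A: "\<not> (\<exists>d. d dvd j \<and> unitary_dvd d n \<and> d \<noteq> 1)"
    show "\<forall>t\<in>atoms n. \<not> t dvd j"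
    proof (intro ballI notI)
      fix t assume t: "t \<in> atoms n" "t dvd j"
      then obtain p where p: "p \<in> prime_factors n" "t = p ^ multiplicity p n"
        by (auto simp: atoms_def)
      show False using A t atom_unitary[OF n p(1)] p(2) by blast
    qed
  next
    assume B: "\<forall>t\<in>atoms n. \<not> t dvd j"
    show "\<not> (\<exists>d. d dvd j \<and> unitary_dvd d n \<and> d \<noteq> 1)"
    proof
      assume "\<exists>d. d dvd j \<and> unitary_dvd d n \<and> d \<noteq> 1"
      then obtain d where "d dvd j" "unitary_dvd d n" "d \<noteq> 1" by blast
      then obtain p where "p \<in> prime_factors n" "p ^ multiplicity p n dvd j"
        using unitary_atom[OF n] dvd_trans by blast
      then show False using B by (auto simp: atoms_def)
    qed
  qed
  finally show ?thesis .
qed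

lemma atoms_props:
  assumes n: "n \<ge> 1"
  shows "finite (atoms n)" "\<And>t. t \<in> atoms n \<Longrightarrow> t dvd n"
    "\<And>s t. s \<in> atoms n \<Longrightarrow> t \<in> atoms n \<Longrightarrow> s \<noteq> t \<Longrightarrow> coprime s t"
    "inj_on (\<lambda>p. p ^ multiplicity p n) (prime_factors n)"
    "\<Prod>(atoms n) = n"
proof -
  show "finite (atoms n)" by (simp add: atoms_def)
  show "\<And>t. t \<in> atoms n \<Longrightarrow> t dvd n" by (auto simp: atoms_def multiplicity_dvd)
  show "\<And>s t. s \<in> atoms n \<Longrightarrow> t \<in> atoms n \<Longrightarrow> s \<noteq> t \<Longrightarrow> coprime s t"
    by (auto simp: atoms_def intro!: coprime_power_left_iff[THEN iffD2]
        coprime_power_right_iff[THEN iffD2] primes_coprime)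
  show inj: "inj_on (\<lambda>p. p ^ multiplicity p n) (prime_factors n)"
  proof (rule inj_onI)
    fix p q assume p: "p \<in> prime_factors n" and q: "q \<in> prime_factors n"
      and e: "p ^ multiplicity p n = q ^ multiplicity q n"
    have "multiplicity p n > 0" using p by (simp add: prime_factors_multiplicity)
    then have "p dvd q ^ multiplicity q n" using e by (metis dvd_power gr0_conv_Suc)
    then have "p dvd q" using p by (auto intro: prime_dvd_power)
    moreover have "prime p" "prime q" using p q by auto
    ultimately show "p = q" by (metis prime_nat_iff not_prime_1)
  qed
  show "\<Prod>(atoms n) = n"
    unfolding atoms_def using prod.reindex[OF inj, of id] prime_factorization_nat[of n] n by simp
qed


lemma poly_Phi_star:
  "poly (Phi_star n) (-1) = (\<Prod>j\<in>{j\<in>{1..n}. gcd_star j n = 1}. -1 - zeta n j)"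
  unfolding Phi_star_def poly_prod by (intro prod.cong) (auto simp: zeta_def)

lemma S_eq:
  assumes "n \<ge> 1"
  shows "{j\<in>{1..n}. gcd_star j n = 1} = {j\<in>{1..n}. \<forall>t\<in>atoms n. \<not> t dvd j}"
  using gs_one_atoms[OF assms] by auto

lemma Phi_HH:
  assumes n: "n \<ge> 1"
    and nz: "\<forall>j\<in>{j\<in>{1..n}. \<forall>t\<in>atoms n. \<not> t dvd j}. zeta n j \<noteq> -1"
  shows "poly (Phi_star n) (-1) = HH n (atoms n)"
  unfolding poly_Phi_star S_eq[OF n] HH_def using nz
  by (intro prod.cong) (auto simp: gg_def)

lemma zeta_double: "zeta n (2 * j) = zeta n j ^ 2"
proof -
  have "2 * of_real pi * \<i> * of_nat (2 * j) / of_nat n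
      = 2 * (2 * of_real pi * \<i> * of_nat j / (of_nat n :: complex))"
    by (simp add: algebra_simps)
  then have "zeta n (2 * j) = exp (2 * (2 * of_real pi * \<i> * of_nat j / of_nat n))"
    unfolding zeta_def by metis
  also have "\<dots> = zeta n j ^ 2" by (simp only: zeta_def power2_eq_square mult_2 exp_add)
  finally show ?thesis .
qed

lemma zeta_m1:
  assumes j: "j \<in> {1..n}" and z: "zeta n j = -1"
  shows "2 * j = n"
proof -
  have n: "n \<ge> 1" using j by auto
  have "zeta n (2 * j) = 1" using z by (simp add: zeta_double)
  moreover have "zeta n (2*j) = 1 \<longleftrightarrow> n dvd 2*j"
    unfolding zeta_def by (rule complex_root_unity_eq_1[OF n])
  ultimately have d: "n dvd 2 * j" by simp
  have "zeta n n = 1" using complex_root_unity_eq_1[OF n, of n] by (simp add: zeta_def)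
  then have "j \<noteq> n" using z by auto
  then have "2 * j < 2 * n" using j by auto
  moreover have "0 < 2 * j" using j by auto
  ultimately have lt: "0 < 2 * j" "2 * j < 2 * n" by auto
  obtain c where c: "2 * j = n * c" using d by (auto elim: dvdE)
  have "n * c < n * 2" using lt c by simp
  then have "c < 2" by simp
  moreover have "c \<noteq> 0" using lt c by auto
  ultimately have "c = 1" by simp
  then show ?thesis using c by simp
qed

lemma zeta_half:
  assumes "n = 2 * h" "h \<ge> 1"
  shows "zeta n h = -1"
proof -
  have "zeta n h = exp (of_real pi * \<i>)" using assms by (simp add: zeta_def field_simps)
  then show ?thesis by simp
qed

definition pc :: "nat set \<Rightarrow> bool" where
  "pc A \<longleftrightarrow> (\<forall>s\<in>A. \<forall>t\<in>A. s \<noteq> t \<longrightarrow> coprime s t)"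

lemma dvd_div_coprime:
  fixes t u N :: nat
  assumes "t dvd N" "u dvd N" "coprime t u"
  shows "t dvd N div u"
proof -
  have "N = u * (N div u)" using assms(2) by simp
  then have "t dvd u * (N div u)" using assms(1) by simp
  then show ?thesis using assms(3) by (simp add: coprime_dvd_mult_right_iff)
qed

lemma HH_odd:
  assumes "finite A"
  shows "pc A \<Longrightarrow> \<forall>t\<in>A. t dvd N \<Longrightarrow> odd N \<Longrightarrow> HH N A = (if A = {} then -2 else 1)"
  using assms
proof (induction A arbitrary: N rule: finite_induct)
  case empty
  have "N \<ge> 1" using empty by (cases N) auto
  then show ?case using HH_empty empty by simp
next
  case (insert u A)
  have N0: "N > 0" using insert by (cases N) auto
  have u: "u dvd N" using insert by auto
  have cop: "\<forall>t\<in>A. coprime t u" using insert.prems insert.hyps unfolding pc_def by auto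
  have pcA: "pc A" using insert.prems unfolding pc_def by auto
  have oq: "odd (N div u)" using insert.prems u by (metis dvd_mult_div_cancel even_mult_iff)
  have dA: "\<forall>t\<in>A. t dvd N div u" using insert.prems cop u by (auto intro: dvd_div_coprime)
  have r: "HH N A = HH N (insert u A) * HH (N div u) A" by (rule HH_rec[OF u N0 cop])
  have i1: "HH N A = (if A = {} then -2 else 1)" using insert pcA by auto
  have i2: "HH (N div u) A = (if A = {} then -2 else 1)" using insert.IH[OF pcA dA oq] .
  show ?case using r i1 i2 by (auto split: if_splits)
qed

lemma HH_even:
  assumes "finite A"
  shows "pc A \<Longrightarrow> \<forall>t\<in>A. t dvd N \<and> odd t \<Longrightarrow> even N \<Longrightarrow> N > 0 \<Longrightarrow>
    HH N A = (if A = {} then - of_nat N else if card A = 1 then of_nat (\<Prod>A) else 1)"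
  using assms
proof (induction A arbitrary: N rule: finite_induct)
  case empty
  have "N \<ge> 1" using empty by (cases N) auto
  then show ?case using HH_empty empty by simp
next
  case (insert u A)
  have N0: "N > 0" using insert by auto
  have u: "u dvd N" "odd u" using insert by auto
  have u0: "u > 0" using u by (cases u) auto
  have cop: "\<forall>t\<in>A. coprime t u" using insert.prems insert.hyps unfolding pc_def by auto
  have pcA: "pc A" using insert.prems unfolding pc_def by auto
  have Nq: "N = u * (N div u)" using u by simp
  have eq: "even (N div u)" using insert.prems u Nq by (metis even_mult_iff)
  have q0: "N div u > 0" using Nq N0 by (metis gr0I mult_0_right)
  have dA: "\<forall>t\<in>A. t dvd N div u \<and> odd t" using insert.prems cop u by (auto intro: dvd_div_coprime)
  have r: "HH N A = HH N (insert u A) * HH (N div u) A" by (rule HH_rec[OF u(1) N0 cop])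
  have i1: "HH N A = (if A = {} then - of_nat N else if card A = 1 then of_nat (\<Prod>A) else 1)"
    using insert pcA by auto
  have i2: "HH (N div u) A = (if A = {} then - of_nat (N div u) else if card A = 1 then of_nat (\<Prod>A) else 1)"
    using insert.IH[OF pcA dA eq q0] .
  show ?case
  proof (cases "A = {}")
    case True
    have "of_nat N = (of_nat u * of_nat (N div u) :: complex)" using Nq by (metis of_nat_mult)
    then have "HH N {u} * (- of_nat (N div u)) = - (of_nat u * of_nat (N div u))"
      using r i1 i2 True by simp
    moreover have "N div u \<noteq> 0" using q0 by simp
    ultimately have "HH N {u} = of_nat u" by (simp add: algebra_simps)
    then show ?thesis using True by simp
  next
    case False
    have ci: "card (insert u A) = Suc (card A)" using insert.hyps by simp
    have cA: "card A \<noteq> 0" using False insert.hyps by simp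
    show ?thesis
    proof (cases "card A = 1")
      case True
      then obtain s where s: "A = {s}" by (metis card_1_singletonE)
      have "s dvd N" using insert.prems s by auto
      then have "s \<noteq> 0" using N0 by (cases s) auto
      then have "HH N (insert u A) * of_nat s = of_nat s" using r i1 i2 True s by simp
      then have "HH N (insert u A) = 1" using \<open>s \<noteq> 0\<close> by simp
      then show ?thesis using ci True by simp
    next
      case False2: False
      have "HH N (insert u A) = 1" using r i1 i2 False False2 by simp
      then show ?thesis using ci cA False2 by simp
    qed
  qed
qed



lemma pf_prime_power:
  assumes "prime (p::nat)" "k \<ge> 1"
  shows "prime_factors (p ^ k) = {p}"
  using assms by (simp add: prime_factorization_prime_power)

lemma odd_prime_power:
  assumes "prime (p::nat)" "p \<noteq> 2"
  shows "odd (p ^ k)"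
proof -
  have "p > 2" using assms prime_ge_2_nat[of p] by simp
  then have "odd p" using assms prime_odd_nat by blast
  then show ?thesis by simp
qed

lemma even_case:
  assumes n: "n \<ge> 1" "even n" and ne: "prime_factors n - {2} \<noteq> {}"
  shows "poly (Phi_star n) (-1) = (if card (prime_factors n - {2}) = 1
           then of_nat (\<Prod>p\<in>prime_factors n - {2}. p ^ multiplicity p n) else 1)"
proof -
  define P' where "P' = prime_factors n - {2}"
  define f where "f = (\<lambda>p::nat. p ^ multiplicity p n)"
  define A' where "A' = f ` P'"
  define a where "a = multiplicity 2 n"
  have two: "2 \<in> prime_factors n" using n by (auto simp: prime_factors_dvd)
  have a1: "a \<ge> 1" using two n by (auto simp: a_def prime_factors_multiplicity)
  have at: "atoms n = insert (2^a) A'"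
    using two by (auto simp: atoms_def A'_def P'_def f_def a_def)
  have oddA: "\<forall>t\<in>A'. odd t" using odd_prime_power by (auto simp: A'_def P'_def f_def)
  have notin: "2^a \<notin> A'" using oddA a1 by auto
  have Ane: "A' \<noteq> {}" using ne by (simp add: A'_def P'_def)
  have finA: "finite A'" by (simp add: A'_def P'_def)
  have pcat: "pc (atoms n)" using atoms_props(3)[OF n(1)] by (auto simp: pc_def)
  have pcA: "pc A'" using pcat at by (auto simp: pc_def)
  have dvdA: "\<forall>t\<in>A'. t dvd n" using atoms_props(2)[OF n(1)] at by auto
  have cop: "\<forall>t\<in>A'. coprime t (2^a)" using oddA
    by (simp add: coprime_power_right_iff coprime_right_2_iff_odd)
  define m where "m = n div 2^a"
  have om: "odd m" unfolding m_def a_def using n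
    by (intro multiplicity_decompose) auto
  have d2: "2^a dvd n" unfolding a_def by (rule multiplicity_dvd)
  have dm: "\<forall>t\<in>A'. t dvd m" using dvdA cop d2 by (auto simp: m_def intro: dvd_div_coprime)
  have r: "HH n A' = HH n (insert (2^a) A') * HH m A'"
    unfolding m_def by (rule HH_rec[OF d2 _ cop]) (use n in auto)
  have hm: "HH m A' = 1" using HH_odd[OF finA pcA _ om] dm Ane by simp
  have hn: "HH n (atoms n) = HH n A'" using r hm at by simp
  have inj: "inj_on f P'" using atoms_props(4)[OF n(1)]
    by (auto simp: f_def P'_def intro: inj_on_subset)
  have he: "HH n A' = (if card A' = 1 then of_nat (\<Prod>A') else 1)"
    using HH_even[OF finA pcA _ n(2)] dvdA oddA Ane n by auto
  have cA: "card A' = card P'" unfolding A'_def using card_image[OF inj] .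
  have pA: "\<Prod>A' = (\<Prod>p\<in>P'. f p)" unfolding A'_def using prod.reindex[OF inj, of id] by simp
  have nz: "\<forall>j\<in>{j\<in>{1..n}. \<forall>t\<in>atoms n. \<not> t dvd j}. zeta n j \<noteq> -1"
  proof (intro ballI notI)
    fix j assume j: "j \<in> {j\<in>{1..n}. \<forall>t\<in>atoms n. \<not> t dvd j}" and z: "zeta n j = -1"
    have "2 * j = n" using zeta_m1[OF _ z] j by auto
    then have jn: "j = n div 2" by auto
    obtain t where t: "t \<in> A'" using Ane by auto
    have "t dvd n div 2" using dvdA t oddA
      by (intro dvd_div_coprime) (auto simp: coprime_right_2_iff_odd n)
    then show False using j jn t at by auto
  qed
  show ?thesis using Phi_HH[OF n(1) nz] hn he cA pA by (simp add: P'_def f_def)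
qed

lemma prime_factors_1: "prime_factors (1::nat) = {}" by simp

theorem lemma4p3:
  fixes n :: nat
  assumes "n \<ge> 1"
  shows "(n = 1 \<longrightarrow> poly (Phi_star n) (-1) = -2)
       \<and> (\<forall>a::nat. a \<ge> 1 \<and> n = 2 ^ a \<longrightarrow> poly (Phi_star n) (-1) = 0)
       \<and> (\<forall>(a::nat) (b::nat) (p::nat). prime p \<and> odd p \<and> a \<ge> 1 \<and> b \<ge> 1 \<and> n = 2 ^ a * p ^ b
            \<longrightarrow> poly (Phi_star n) (-1) = of_nat (p ^ b))
       \<and> (n \<noteq> 1 \<and> \<not> (\<exists>a::nat. a \<ge> 1 \<and> n = 2 ^ a)
            \<and> \<not> (\<exists>(a::nat) (b::nat) (p::nat). prime p \<and> odd p \<and> a \<ge> 1 \<and> b \<ge> 1 \<and> n = 2 ^ a * p ^ b)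
            \<longrightarrow> poly (Phi_star n) (-1) = 1)"
proof (intro conjI impI allI)
  have oddnz: "\<forall>j\<in>{j\<in>{1..n}. \<forall>t\<in>atoms n. \<not> t dvd j}. zeta n j \<noteq> -1" if "odd n"
    using zeta_m1 that by fastforce
  {
    assume n1: "n = 1"
    have "atoms n = {}" using n1 by (simp add: atoms_def)
    then show "poly (Phi_star n) (-1) = -2"
      using Phi_HH[OF assms oddnz] n1 HH_empty[of 1] by simp
  }
  {
    fix a :: nat assume a: "a \<ge> 1 \<and> n = 2 ^ a"
    define h where "h = (2::nat) ^ (a - 1)"
    have nh: "n = 2 * h" using a by (simp add: h_def power_Suc[symmetric])
    have h1: "h \<ge> 1" by (simp add: h_def)
    have pf: "prime_factors n = {2}" using a pf_prime_power[of 2 a] by simp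
    have "multiplicity 2 n = a" using a by (simp add: multiplicity_prime_power)
    then have at: "atoms n = {2^a}" using pf by (simp add: atoms_def)
    have "\<not> 2^a dvd h"
    proof
      assume "2^a dvd h"
      then have "2^a \<le> h" using h1 by (intro dvd_imp_le) auto
      then show False using nh a by simp
    qed
    then have hS: "h \<in> {j\<in>{1..n}. gcd_star j n = 1}"
      using S_eq[OF assms] at h1 nh by auto
    have z0: "-1 - zeta n h = 0" using zeta_half[OF nh h1] by simp
    show "poly (Phi_star n) (-1) = 0"
      unfolding poly_Phi_star by (rule prod_zero) (use hS z0 in auto)
  }
  {
    fix a b p :: nat
    assume H: "prime p \<and> odd p \<and> a \<ge> 1 \<and> b \<ge> 1 \<and> n = 2 ^ a * p ^ b"
    have p2: "p \<noteq> 2" using H by auto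
    have "prime_factors ((2::nat)^a * p^b) = prime_factors (2^a) \<union> prime_factors (p^b)"
      by (rule prime_factors_product) (use H prime_gt_0_nat[of p] in auto)
    then have pf: "prime_factors n = {2, p}"
      using H pf_prime_power[of 2 a] pf_prime_power[of p b] by auto
    have "\<not> p dvd 2 ^ a"
    proof
      assume "p dvd 2 ^ a"
      then have "p dvd 2" using H prime_dvd_power by blast
      then show False using H p2 by (metis prime_nat_iff not_prime_1 two_is_prime_nat)
    qed
    then have mp: "multiplicity p n = b"
      using H prime_gt_0_nat[of p] by (intro multiplicity_decomposeI[of _ _ _ "2^a"]) auto
    have P': "prime_factors n - {2} = {p}" using pf p2 by auto
    show "poly (Phi_star n) (-1) = of_nat (p ^ b)"
    proof -
      have ev: "even n" using H by simp
      have ne: "prime_factors n - {2} \<noteq> {}" using P' by simp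
      show ?thesis using even_case[OF assms ev ne] P' mp by simp
    qed
  }
  {
    assume H: "n \<noteq> 1 \<and> \<not> (\<exists>a::nat. a \<ge> 1 \<and> n = 2 ^ a)
            \<and> \<not> (\<exists>(a::nat) (b::nat) (p::nat). prime p \<and> odd p \<and> a \<ge> 1 \<and> b \<ge> 1 \<and> n = 2 ^ a * p ^ b)"
    have fac: "n = (\<Prod>p\<in>prime_factors n. p ^ multiplicity p n)"
      using prime_factorization_nat[of n] assms by simp
    show "poly (Phi_star n) (-1) = 1"
    proof (cases "odd n")
      case True
      obtain q where q: "prime q" "q dvd n" using H prime_factor_nat by blast
      then have "q \<in> prime_factors n" using assms by (auto simp: prime_factors_dvd)
      then have "prime_factors n \<noteq> {}" by auto
      then have ne: "atoms n \<noteq> {}" by (simp add: atoms_def)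
      have pcat: "pc (atoms n)" using atoms_props(3)[OF assms] by (auto simp: pc_def)
      have "HH n (atoms n) = 1"
        using HH_odd[OF atoms_props(1)[OF assms] pcat _ True] atoms_props(2)[OF assms] ne by simp
      then show ?thesis using Phi_HH[OF assms oddnz[OF True]] by simp
    next
      case False
      have two: "2 \<in> prime_factors n" using False assms by (auto simp: prime_factors_dvd)
      have a1: "multiplicity 2 n \<ge> 1" using two assms by (auto simp: prime_factors_multiplicity)
      have ne: "prime_factors n - {2} \<noteq> {}"
      proof
        assume "prime_factors n - {2} = {}"
        then have "prime_factors n = {2}" using two by auto
        then have "n = 2 ^ multiplicity 2 n" using fac by simp
        then show False using H a1 by blast
      qed
      have c: "card (prime_factors n - {2}) \<noteq> 1"
      proof
        assume "card (prime_factors n - {2}) = 1"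
        then obtain p where p: "prime_factors n - {2} = {p}" by (metis card_1_singletonE)
        then have pp: "prime p" "p \<noteq> 2" "p \<in> prime_factors n" by auto
        have pf: "prime_factors n = {2, p}" using p two by auto
        have "n = 2 ^ multiplicity 2 n * p ^ multiplicity p n" using fac pf pp by simp
        moreover have "multiplicity p n \<ge> 1" using pp assms by (auto simp: prime_factors_multiplicity)
        moreover have "odd p" using pp prime_odd_nat prime_ge_2_nat[of p] by fastforce
        ultimately show False using H a1 pp by blast
      qed
      show ?thesis using even_case[OF assms _ ne] False c by simp
    qed
  }
qed

end
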